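(* Let $n\ge2$, $y=(y_1,\dots,y_{n-1},q)\in\mathbb C^n$ and $j\in\{1,\dots,[n/2]\}$. Let $\tilde y^j\in\mathbb C^n$ be obtained from $y$ by interchanging the coordinates $y_j$ and $y_{n-j}$ (all other coordinates, including $q$, unchanged). Then $y\in\widetilde{\mathbb G}_n$ if and only if $\tilde y^j\in\widetilde{\mathbb G}_n$, and $y\in\widetilde\Gamma_n$ if and only if $\tilde y^j\in\widetilde\Gamma_n$.
   Context: $\mathbb D$ is the open unit disc. $\widetilde{\mathbb G}_n=\{(y_1,\dots,y_{n-1},q)\in\mathbb C^n: q\in\mathbb D,\ y_j=\beta_j+\bar\beta_{n-j}q$ for some $\beta_j\in\mathbb C$ with $|\beta_j|+|\beta_{n-j}|<\binom{n}{j}$, $j=1,\dots,n-1\}$; $\widetilde\Gamma_n$ is its closure. *)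

theory Defs
  imports "HOL-Analysis.Analysis"
begin

text \<open>A point (y_1,...,y_{n-1},q) of C^n is represented as a function
  y :: nat => complex with y k = y_k for 1 <= k <= n-1, y n = q, and y k = 0
  for k outside {1..n}.\<close>

definition tetrablock_G :: "nat \<Rightarrow> (nat \<Rightarrow> complex) set" where
  "tetrablock_G n = {y. (\<forall>k. k \<notin> {1..n} \<longrightarrow> y k = 0) \<and> norm (y n) < 1 \<and>
     (\<exists>\<beta> :: nat \<Rightarrow> complex. \<forall>j\<in>{1..n-1}.
         y j = \<beta> j + cnj (\<beta> (n - j)) * y n \<and>
         norm (\<beta> j) + norm (\<beta> (n - j)) < real (n choose j))}"

definition tetrablock_Gamma :: "nat \<Rightarrow> (nat \<Rightarrow> complex) set" where
  "tetrablock_Gamma n = closure (tetrablock_G n)"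

definition swap_coords :: "nat \<Rightarrow> nat \<Rightarrow> (nat \<Rightarrow> complex) \<Rightarrow> (nat \<Rightarrow> complex)" where
  "swap_coords a b y = y(a := y b, b := y a)"

end

theory Submission
  imports Defs
begin

lemma swap_invol: "swap_coords a b (swap_coords a b y) = y"
  unfolding swap_coords_def by (auto simp: fun_eq_iff)

lemma swap_cont: "continuous_on S (swap_coords a b)"
proof (rule continuous_on_coordinatewise_then_product)
  fix i
  have eq: "(\<lambda>x. swap_coords a b x i) = (\<lambda>x. x (if i = b then a else if i = a then b else i))"
    unfolding swap_coords_def by (auto simp: fun_eq_iff)
  show "continuous_on S (\<lambda>x. swap_coords a b x i)"
    unfolding eq by (rule continuous_on_product_then_coordinatewise[OF continuous_on_id])
qed

lemma swap_G:
  assumes "n \<ge> 2" and "j \<in> {1..n div 2}" and y: "y \<in> tetrablock_G n"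
  shows "swap_coords j (n - j) y \<in> tetrablock_G n"
proof -
  let ?m = "n - j"
  from assms have j1: "1 \<le> j" "j \<le> ?m" "?m \<le> n - 1" "j < n" "n - ?m = j" by auto
  from y obtain \<beta> where sup: "\<forall>k. k \<notin> {1..n} \<longrightarrow> y k = 0" and q: "norm (y n) < 1"
    and b: "\<forall>k\<in>{1..n-1}. y k = \<beta> k + cnj (\<beta> (n - k)) * y n \<and>
         norm (\<beta> k) + norm (\<beta> (n - k)) < real (n choose k)"
    unfolding tetrablock_G_def by blast
  define y' where "y' = swap_coords j ?m y"
  define \<beta>' where "\<beta>' = \<beta>(j := \<beta> ?m, ?m := \<beta> j)"
  have yn: "y' n = y n" using j1 unfolding y'_def swap_coords_def by auto
  have s': "\<forall>k. k \<notin> {1..n} \<longrightarrow> y' k = 0" using j1 sup unfolding y'_def swap_coords_def by auto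
  have "\<forall>k\<in>{1..n-1}. y' k = \<beta>' k + cnj (\<beta>' (n - k)) * y' n \<and>
         norm (\<beta>' k) + norm (\<beta>' (n - k)) < real (n choose k)"
  proof
    fix k assume k: "k \<in> {1..n-1}"
    have nk: "n - (n - k) = k" using k by auto
    have nk2: "n - k \<in> {1..n-1}" using k by auto
    show "y' k = \<beta>' k + cnj (\<beta>' (n - k)) * y' n \<and>
         norm (\<beta>' k) + norm (\<beta>' (n - k)) < real (n choose k)"
    proof (cases "k = j \<or> k = ?m")
      case True
      have bj: "y j = \<beta> j + cnj (\<beta> ?m) * y n" "norm (\<beta> j) + norm (\<beta> ?m) < real (n choose j)"
        using b j1 by auto
      have bm: "y ?m = \<beta> ?m + cnj (\<beta> j) * y n" "norm (\<beta> ?m) + norm (\<beta> j) < real (n choose ?m)"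
        using b[rule_format, of ?m] j1 by auto
      show ?thesis using True bj bm j1 unfolding yn unfolding y'_def \<beta>'_def swap_coords_def
        by (auto simp: add.commute)
    next
      case False
      have k': "1 \<le> k" "k \<le> n - 1" using k by auto
      then have "n - k \<noteq> j" "n - k \<noteq> ?m" using False j1 by arith+
      then show ?thesis using False b k yn unfolding y'_def \<beta>'_def swap_coords_def by auto
    qed
  qed
  then show ?thesis using s' q yn unfolding tetrablock_G_def y'_def[symmetric] by auto
qed

theorem mainTheorem4:
  fixes n j :: nat and y :: "nat \<Rightarrow> complex"
  assumes "n \<ge> 2" and "j \<in> {1..n div 2}"
  shows "(y \<in> tetrablock_G n \<longleftrightarrow> swap_coords j (n - j) y \<in> tetrablock_G n) \<and>
         (y \<in> tetrablock_Gamma n \<longleftrightarrow> swap_coords j (n - j) y \<in> tetrablock_Gamma n)"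
proof -
  let ?S = "swap_coords j (n - j)"
  have G: "\<And>z. z \<in> tetrablock_G n \<Longrightarrow> ?S z \<in> tetrablock_G n" using swap_G assms by blast
  have "?S ` closure (tetrablock_G n) \<subseteq> closure (tetrablock_G n)"
    by (rule image_closure_subset[OF swap_cont]) (use G closure_subset in auto)
  then have Gam: "\<And>z. z \<in> tetrablock_Gamma n \<Longrightarrow> ?S z \<in> tetrablock_Gamma n"
    unfolding tetrablock_Gamma_def by auto
  show ?thesis using G[of y] G[of "?S y"] Gam[of y] Gam[of "?S y"] swap_invol[of j "n-j" y] by auto
qed

end
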